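(* For every positive integer $k$ divisible by $4$, $$\det A_1(k)=-H_k+\sum_{m=2}^{k+1}(-1)^m\binom{k}{m-1}\zeta(m),\qquad H_k=\sum_{j=1}^{k}\frac1j,$$ and consequently $$\gamma=\lim_{\substack{k\to\infty\\ 4\mid k}}\left(-H_k+\sum_{m=2}^{k+1}(-1)^m\binom{k}{m-1}\zeta(m)\right),$$ where $\gamma$ is the Euler–Mascheroni constant.
   Context: For an integer $k\ge1$, $A(k)$ is the $k\times k$ matrix with entries $A(k)_{ij}=\frac{(-i)^{j-1}}{(j-1)!}$ ($1\le i,j\le k$), $B(k)$ is the column vector with entries $B(k)_i=\zeta(i+1)-\frac1i$, and $A_1(k)$ is $A(k)$ with its first column replaced by $B(k)$. $\zeta$ is the Riemann zeta function. *)

theory Defs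
  imports "HOL-Analysis.Harmonic_Numbers" "Jordan_Normal_Form.Determinant"
begin

definition zeta_nat :: "nat \<Rightarrow> real" where
  "zeta_nat s = (\<Sum>n. 1 / real (Suc n) ^ s)"

text \<open>Matrices are 0-indexed: entry (i,j) here is entry (i+1,j+1) of the paper.
  A(k)_{ij} = (-i)^(j-1)/(j-1)!.\<close>
definition A_mat :: "nat \<Rightarrow> real Matrix.mat" where
  "A_mat k = Matrix.mat k k (\<lambda>(i, j). (- real (Suc i)) ^ j / fact j)"

definition B_vec :: "nat \<Rightarrow> real Matrix.vec" where
  "B_vec k = Matrix.vec k (\<lambda>i. zeta_nat (Suc i + 1) - 1 / real (Suc i))"

definition A1_mat :: "nat \<Rightarrow> real Matrix.mat" where
  "A1_mat k = Matrix.mat k k (\<lambda>(i, j). if j = 0 then vec_index (B_vec k) i else index_mat (A_mat k) (i, j))"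

definition RHS5 :: "nat \<Rightarrow> real" where
  "RHS5 k = - harm k + (\<Sum>m = 2..k + 1. (-1) ^ m * real (k choose (m - 1)) * zeta_nat m)"

end

theory Submission
  imports Defs
begin

lemma altsum:
  fixes a :: real
  shows "m \<le> n \<Longrightarrow> (\<Sum>l\<le>n. (-1)^l * real (n choose l) * (real l + a)^m) = (if m < n then 0 else (-1)^n * fact n)"
proof (induction n arbitrary: m)
  case 0
  then show ?case by simp
next
  case (Suc n)
  define f where "f = (\<lambda>l::nat. (real l + a)^m)"
  have "(\<Sum>l\<le>Suc n. (-1)^l * real (Suc n choose l) * f l)
     = f 0 + (\<Sum>l\<le>n. (-1)^Suc l * real (Suc n choose Suc l) * f (Suc l))"
    by (subst sum.atMost_Suc_shift) simp
  also have "\<dots> = f 0 + (\<Sum>l\<le>n. (-1)^Suc l * real (n choose Suc l) * f (Suc l))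
      - (\<Sum>l\<le>n. (-1)^l * real (n choose l) * f (Suc l))"
  proof -
    have "(-1)^Suc l * real (Suc n choose Suc l) * f (Suc l) = (-1)^Suc l * real (n choose Suc l) * f (Suc l) - (-1)^l * real (n choose l) * f (Suc l)" for l
      by (simp add: algebra_simps)
    then show ?thesis by (simp add: sum_subtractf)
  qed
  also have "f 0 + (\<Sum>l\<le>n. (-1)^Suc l * real (n choose Suc l) * f (Suc l))
      = (\<Sum>l\<le>Suc n. (-1)^l * real (n choose l) * f l)"
    by (simp only: sum.atMost_Suc_shift) simp
  also have "\<dots> = (\<Sum>l\<le>n. (-1)^l * real (n choose l) * f l)"
    by simp
  finally have eq1: "(\<Sum>l\<le>Suc n. (-1)^l * real (Suc n choose l) * f l)
      = (\<Sum>l\<le>n. (-1)^l * real (n choose l) * (f l - f (Suc l)))"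
    by (simp add: sum_subtractf algebra_simps)
  have fd: "f l - f (Suc l) = - (\<Sum>i<m. real (m choose i) * (real l + a)^i)" for l
  proof -
    have "f (Suc l) = (\<Sum>i\<le>m. real (m choose i) * (real l + a)^i * 1^(m-i))"
      unfolding f_def by (subst binomial_ring[symmetric]) (simp add: algebra_simps)
    also have "\<dots> = (\<Sum>i<m. real (m choose i) * (real l + a)^i) + (real l + a)^m"
      by (simp add: lessThan_Suc_atMost[symmetric])
    finally show ?thesis unfolding f_def by simp
  qed
  have "(\<Sum>l\<le>n. (-1)^l * real (n choose l) * (f l - f (Suc l)))
      = - (\<Sum>i<m. real (m choose i) * (\<Sum>l\<le>n. (-1)^l * real (n choose l) * (real l + a)^i))"
    unfolding fd by (simp add: sum_distrib_left sum_distrib_right sum_negf algebra_simps sum.swap[of _ "{..n}"])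
  also have "\<dots> = - (\<Sum>i<m. if i = n then real (m choose i) * ((-1)^n * fact n) else 0)"
    using Suc.prems by (intro arg_cong[where f=uminus] sum.cong refl) (simp add: Suc.IH)
  also have "\<dots> = (if m < Suc n then 0 else (-1)^Suc n * fact (Suc n))"
  proof (cases "m = Suc n")
    case True
    then show ?thesis by (simp add: sum.delta)
  next
    case False
    then show ?thesis using Suc.prems by (simp add: sum.delta)
  qed
  finally show ?case using eq1 unfolding f_def by simp
qed

lemma A_carrier: "A_mat k \<in> carrier_mat k k"
  by (simp add: A_mat_def)

definition W_mat :: "nat \<Rightarrow> real Matrix.mat" where
  "W_mat k = Matrix.mat k k (\<lambda>(i, l). if l \<le> i then (-1)^(i-l) * real (i choose l) else 0)"

lemma prod_list_diag: "prod_list (diag_mat M) = (\<Prod>i<dim_row M. M $$ (i,i))"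
  by (simp add: diag_mat_def prod.list_conv_set_nth atLeast0LessThan)

lemma det_W: "Determinant.det (W_mat k) = 1"
proof -
  have "Determinant.det (W_mat k) = prod_list (diag_mat (W_mat k))"
    by (rule det_lower_triangular[of k]) (auto simp: W_mat_def)
  also have "\<dots> = 1" by (simp add: prod_list_diag W_mat_def)
  finally show ?thesis .
qed

lemma WA_entry:
  assumes "i < k" "j < k" "j \<le> i"
  shows "(W_mat k * A_mat k) $$ (i,j) = (if j < i then 0 else (-1)^i)"
proof -
  have "(W_mat k * A_mat k) $$ (i,j) = (\<Sum>l<k. (if l \<le> i then (-1)^(i-l) * real (i choose l) else 0) * ((- real (Suc l)) ^ j / fact j))"
    using assms by (simp add: W_mat_def A_mat_def scalar_prod_def atLeast0LessThan)
  also have "\<dots> = (\<Sum>l\<le>i. (-1)^(i-l) * real (i choose l) * ((- real (Suc l)) ^ j / fact j))"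
  proof -
    have "(\<Sum>l<k. (if l \<le> i then (-1)^(i-l) * real (i choose l) else 0) * ((- real (Suc l)) ^ j / fact j))
       = (\<Sum>l<k. if l \<in> {..i} then (-1)^(i-l) * real (i choose l) * ((- real (Suc l)) ^ j / fact j) else 0)"
      by (intro sum.cong) auto
    also have "\<dots> = (\<Sum>l\<in>{..<k} \<inter> {..i}. (-1)^(i-l) * real (i choose l) * ((- real (Suc l)) ^ j / fact j))"
      by (subst sum.inter_restrict[OF finite_lessThan]) (rule refl)
    also have "{..<k} \<inter> {..i} = {..i}" using assms by auto
    finally show ?thesis .
  qed
  also have "\<dots> = (-1)^i * (-1)^j / fact j * (\<Sum>l\<le>i. (-1)^l * real (i choose l) * (real l + 1)^j)"
  proof -
    have "(-1)^(i-l) * real (i choose l) * ((- real (Suc l)) ^ j / fact j) = (-1)^i * (-1)^j / fact j * ((-1)^l * real (i choose l) * (real l + 1)^j)" if "l \<le> i" for l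
    proof -
      have h: "(-1::real)^i = (-1)^(i-l) * (-1)^l"
        using that by (simp add: power_add[symmetric])
      have h2: "(-1::real)^l * (-1)^l = 1"
        by (simp add: power_add[symmetric] mult_2[symmetric])
      have "(-1::real)^i * (-1)^l = (-1)^(i-l) * ((-1)^l * (-1)^l)"
        by (simp add: h mult.assoc)
      then have "(-1::real)^(i-l) = (-1)^i * (-1)^l" by (simp add: h2)
      moreover have "(- real (Suc l)) ^ j = (-1)^j * (real l + 1)^j"
        by (subst power_minus) (simp add: add.commute)
      ultimately show ?thesis by (simp add: field_simps)
    qed
    then have "(\<Sum>l\<le>i. (-1)^(i-l) * real (i choose l) * ((- real (Suc l)) ^ j / fact j)) = (\<Sum>l\<le>i. (-1)^i * (-1)^j / fact j * ((-1)^l * real (i choose l) * (real l + 1)^j))"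
      by (intro sum.cong refl) simp
    then show ?thesis by (simp only: sum_distrib_left)
  qed
  also have "\<dots> = (if j < i then 0 else (-1)^i)"
    using altsum[of j i 1] assms by (auto simp: power_add[symmetric])
  finally show ?thesis .
qed

lemma det_A: "Determinant.det (A_mat k) = (\<Prod>i<k. (-1)^i)"
proof -
  have W: "W_mat k \<in> carrier_mat k k" by (simp add: W_mat_def)
  have "Determinant.det (W_mat k * A_mat k) = Determinant.det (A_mat k)"
    using det_mult[OF W A_carrier] det_W by simp
  moreover have "Determinant.det (W_mat k * A_mat k) = prod_list (diag_mat (W_mat k * A_mat k))"
    by (rule det_upper_triangular[of _ k]) (use W A_carrier WA_entry in \<open>auto simp: upper_triangular_def\<close>)
  moreover have "prod_list (diag_mat (W_mat k * A_mat k)) = (\<Prod>i<k. (-1)^i)"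
    using W A_carrier by (simp add: prod_list_diag WA_entry)
  ultimately show ?thesis by simp
qed

lemma prod_sign4: "(\<Prod>i<4*q. (-1::real)^i) = 1"
proof (induction q)
  case 0 then show ?case by simp
next
  case (Suc q)
  have "{..<4 * Suc q} = {..<4*q} \<union> {4*q, 4*q+1, 4*q+2, 4*q+3}" by auto
  then show ?case using Suc by (simp add: prod.union_disjoint power_add)
qed

lemma w_A:
  assumes "0 < k" "j < k"
  shows "(\<Sum>i<k. (-1)^i * real (k choose Suc i) * A_mat k $$ (i,j)) = (if j = 0 then 1 else 0)"
proof -
  obtain k' where k': "k = Suc k'" using assms by (cases k) auto
  define f where "f = (\<lambda>l. (-1::real)^l * real (k choose l) * (real l + 0)^j)"
  have "(\<Sum>l\<le>k. f l) = 0" using altsum[of j k 0] assms unfolding f_def by simp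
  moreover have "(\<Sum>l\<le>k. f l) = f 0 + (\<Sum>i<k. f (Suc i))"
    unfolding k' by (simp only: sum.atMost_Suc_shift lessThan_Suc_atMost)
  ultimately have s: "(\<Sum>i<k. f (Suc i)) = - f 0" by simp
  have "(\<Sum>i<k. (-1)^i * real (k choose Suc i) * A_mat k $$ (i,j)) = (\<Sum>i<k. - ((-1)^j / fact j) * f (Suc i))"
  proof (intro sum.cong refl)
    fix i assume "i \<in> {..<k}"
    then have "A_mat k $$ (i,j) = (- real (Suc i)) ^ j / fact j" using assms by (simp add: A_mat_def)
    moreover have "(- real (Suc i)) ^ j = (-1)^j * (real (Suc i))^j"
      by (rule power_minus)
    ultimately show "(-1)^i * real (k choose Suc i) * A_mat k $$ (i,j) = - ((-1)^j / fact j) * f (Suc i)"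
      by (simp add: f_def field_simps)
  qed
  also have "\<dots> = - ((-1)^j / fact j) * (\<Sum>i<k. f (Suc i))" by (simp only: sum_distrib_left)
  also have "\<dots> = ((-1)^j / fact j) * f 0" by (simp only: s)
  also have "\<dots> = (if j = 0 then 1 else 0)" by (simp add: f_def)
  finally show ?thesis .
qed

lemma det_A1_general:
  assumes k: "0 < k" and dA: "Determinant.det (A_mat k) = 1"
  shows "Determinant.det (A1_mat k) = (\<Sum>i<k. (-1)^i * real (k choose Suc i) * vec_index (B_vec k) i)"
proof -
  let ?A = "A_mat k" and ?B = "B_vec k"
  have A: "?A \<in> carrier_mat k k" by (rule A_carrier)
  have Bc: "?B \<in> carrier_vec k" by (simp add: B_vec_def)
  define x where "x = adj_mat ?A *\<^sub>v ?B"
  have x: "x \<in> carrier_vec k" using adj_mat(1)[OF A] Bc by (simp add: x_def)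
  have Ax: "?A *\<^sub>v x = ?B"
  proof -
    have "?A *\<^sub>v x = (?A * adj_mat ?A) *\<^sub>v ?B"
      unfolding x_def using A adj_mat(1)[OF A] Bc by (simp add: assoc_mult_mat_vec)
    also have "\<dots> = ?B"
    proof -
      have "(1::real) \<cdot>\<^sub>m 1\<^sub>m k = 1\<^sub>m k" by (rule eq_matI) auto
      then show ?thesis using adj_mat(2)[OF A] dA Bc by simp
    qed
    finally show ?thesis .
  qed
  have rc: "A1_mat k = replace_col ?A ?B 0"
    by (rule eq_matI) (auto simp: A1_mat_def replace_col_def A_mat_def)
  have "Determinant.det (A1_mat k) = x $ 0"
    using cramer_lemma_mat[OF A x k] Ax dA rc by simp
  also have "x $ 0 = (\<Sum>j<k. (if j = 0 then 1 else 0) * x $ j)"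
  proof -
    have "(\<Sum>j<k. (if j = 0 then 1 else 0) * x $ j) = (\<Sum>j<k. if j = 0 then x $ j else 0)"
      by (rule sum.cong) auto
    then show ?thesis using k by simp
  qed
  also have "\<dots> = (\<Sum>j<k. (\<Sum>i<k. (-1)^i * real (k choose Suc i) * ?A $$ (i,j)) * x $ j)"
    using w_A[OF k] by simp
  also have "\<dots> = (\<Sum>i<k. (-1)^i * real (k choose Suc i) * (\<Sum>j<k. ?A $$ (i,j) * x $ j))"
  proof -
    have "(\<Sum>j<k. (\<Sum>i<k. (-1)^i * real (k choose Suc i) * ?A $$ (i,j)) * x $ j)
        = (\<Sum>j<k. \<Sum>i<k. (-1)^i * real (k choose Suc i) * (?A $$ (i,j) * x $ j))"
      by (simp only: sum_distrib_right mult.assoc)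
    also have "\<dots> = (\<Sum>i<k. \<Sum>j<k. (-1)^i * real (k choose Suc i) * (?A $$ (i,j) * x $ j))"
      by (rule sum.swap)
    also have "\<dots> = (\<Sum>i<k. (-1)^i * real (k choose Suc i) * (\<Sum>j<k. ?A $$ (i,j) * x $ j))"
      by (simp only: sum_distrib_left)
    finally show ?thesis .
  qed
  also have "\<dots> = (\<Sum>i<k. (-1)^i * real (k choose Suc i) * ?B $ i)"
  proof (intro sum.cong refl arg_cong2[where f="(*)"])
    fix i assume i: "i \<in> {..<k}"
    have "?B $ i = (?A *\<^sub>v x) $ i" using Ax by simp
    also have "\<dots> = (\<Sum>j<k. ?A $$ (i,j) * x $ j)"
      using i A x by (simp add: scalar_prod_def atLeast0LessThan)
    finally show "(\<Sum>j<k. ?A $$ (i,j) * x $ j) = ?B $ i" by simp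
  qed
  finally show ?thesis .
qed

lemma harm_alt: "(\<Sum>i<k. (-1)^i * real (k choose Suc i) / real (Suc i)) = harm k"
proof (induction k)
  case 0 then show ?case by (simp add: harm_def)
next
  case (Suc k)
  have c: "real (k choose i) / real (Suc i) = real (Suc k choose Suc i) / real (Suc k)" for i
  proof -
    have "real (Suc k) * real (k choose i) = real (Suc k choose Suc i) * real (Suc i)"
      using Suc_times_binomial_eq[of k i] by (metis of_nat_mult)
    then show ?thesis by (simp add: field_simps)
  qed
  have "(\<Sum>i<Suc k. (-1)^i * real (Suc k choose Suc i) / real (Suc i))
     = (\<Sum>i<Suc k. (-1)^i * real (k choose Suc i) / real (Suc i)) + (\<Sum>i<Suc k. (-1)^i * real (k choose i) / real (Suc i))"
    by (simp add: sum.distrib[symmetric] add_divide_distrib algebra_simps)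
  also have "(\<Sum>i<Suc k. (-1)^i * real (k choose Suc i) / real (Suc i)) = harm k"
    using Suc.IH by simp
  also have "(\<Sum>i<Suc k. (-1)^i * real (k choose i) / real (Suc i)) = (\<Sum>i<Suc k. (-1)^i * real (Suc k choose Suc i)) / real (Suc k)"
  proof -
    have "(\<Sum>i<Suc k. (-1)^i * real (k choose i) / real (Suc i)) = (\<Sum>i<Suc k. (-1)^i * real (Suc k choose Suc i) / real (Suc k))"
      by (intro sum.cong refl) (metis c times_divide_eq_right)
    then show ?thesis by (simp only: sum_divide_distrib[symmetric])
  qed
  also have "(\<Sum>i<Suc k. (-1)^i * real (Suc k choose Suc i)) = 1"
  proof -
    have "(\<Sum>l\<le>Suc k. (-1)^l * real (Suc k choose l) * (real l + 0)^0) = 0"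
      using altsum[of 0 "Suc k" 0] by simp
    then have "(\<Sum>l\<le>Suc k. (-1)^l * real (Suc k choose l)) = 0" by simp
    then have "1 + (\<Sum>i\<le>k. (-1)^Suc i * real (Suc k choose Suc i)) = 0"
      by (simp only: sum.atMost_Suc_shift) simp
    then show ?thesis by (simp add: lessThan_Suc_atMost sum_negf)
  qed
  finally show ?case by (simp add: harm_Suc inverse_eq_divide)
qed

lemma det_A1_formula:
  assumes k: "0 < k" and dA: "Determinant.det (A_mat k) = 1"
  shows "Determinant.det (A1_mat k) = RHS5 k"
proof -
  have "Determinant.det (A1_mat k) = (\<Sum>i<k. (-1)^i * real (k choose Suc i) * (zeta_nat (i+2) - 1 / real (Suc i)))"
  proof -
    have "(\<Sum>i<k. (-1)^i * real (k choose Suc i) * vec_index (B_vec k) i) = (\<Sum>i<k. (-1)^i * real (k choose Suc i) * (zeta_nat (i+2) - 1 / real (Suc i)))"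
      by (intro sum.cong refl) (simp add: B_vec_def)
    then show ?thesis using det_A1_general[OF k dA] by simp
  qed
  also have "\<dots> = (\<Sum>i<k. (-1)^i * real (k choose Suc i) * zeta_nat (i+2)) - harm k"
    by (simp add: harm_alt[symmetric] sum_subtractf right_diff_distrib)
  also have "(\<Sum>i<k. (-1)^i * real (k choose Suc i) * zeta_nat (i+2)) = (\<Sum>m = 2..k + 1. (-1) ^ m * real (k choose (m - 1)) * zeta_nat m)"
  proof -
    obtain k' where k': "k = Suc k'" using k by (cases k) auto
    have "(\<Sum>m = 2..k + 1. (-1) ^ m * real (k choose (m - 1)) * zeta_nat m) = (\<Sum>m = 0+2..k'+2. (-1) ^ m * real (k choose (m - 1)) * zeta_nat m)"
      by (rule sum.cong) (auto simp: k')
    also have "\<dots> = (\<Sum>i = 0..k'. (-1) ^ (i+2) * real (k choose (i+2 - 1)) * zeta_nat (i+2))"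
      by (rule sum.shift_bounds_cl_nat_ivl)
    also have "\<dots> = (\<Sum>i<k. (-1)^i * real (k choose Suc i) * zeta_nat (i+2))"
      by (simp add: k' atLeast0AtMost lessThan_Suc_atMost)
    finally show ?thesis by simp
  qed
  finally show ?thesis by (simp add: RHS5_def)
qed

lemma part1: "0 < k \<and> 4 dvd k \<longrightarrow> Determinant.det (A1_mat k) = RHS5 k"
proof
  assume h: "0 < k \<and> 4 dvd k"
  then obtain q where q: "k = 4*q" by (auto elim: dvdE)
  have "Determinant.det (A_mat k) = 1" using det_A prod_sign4 q by simp
  then show "Determinant.det (A1_mat k) = RHS5 k" using det_A1_formula h by simp
qed

lemma zeta_summable: "2 \<le> s \<Longrightarrow> summable (\<lambda>n. 1 / real (Suc n) ^ s)"
  using inverse_power_summable[of s, where 'a=real]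
  by (subst summable_Suc_iff) (simp add: inverse_eq_divide)

definition qq :: "nat \<Rightarrow> real" where "qq n = 1 - 1 / real (Suc n)"
definition psi :: "nat \<Rightarrow> nat \<Rightarrow> real" where "psi k n = (1 - qq n ^ k) / real (Suc n)"
definition GG :: "nat \<Rightarrow> nat \<Rightarrow> real" where "GG k n = (\<Sum>j\<le>k. qq n ^ j / real j)"
definition II :: "nat \<Rightarrow> nat \<Rightarrow> real" where "II k n = GG k (Suc n) - GG k n"
definition cc :: "nat \<Rightarrow> nat \<Rightarrow> real" where "cc k n = psi k n - II k n"

lemma psi_expand: "psi k n = (\<Sum>i<k. (-1)^i * real (k choose Suc i) * (1 / real (Suc n) ^ (i+2)))"
proof -
  define x where "x = 1 / real (Suc n)"
  have q: "qq n = -x + 1" by (simp add: qq_def x_def)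
  have "qq n ^ k = (\<Sum>l\<le>k. real (k choose l) * (-x)^l * 1^(k-l))"
    unfolding q by (rule binomial_ring)
  also have "\<dots> = 1 + (\<Sum>i<k. real (k choose Suc i) * (-x)^Suc i)"
    by (cases k) (simp_all only: sum.atMost_Suc_shift lessThan_Suc_atMost, simp_all)
  finally have h1: "1 - qq n ^ k = - (\<Sum>i<k. real (k choose Suc i) * (-x)^Suc i)"
    by simp
  have t: "real (k choose Suc i) * (-x)^Suc i = - ((-1)^i * real (k choose Suc i) * x^Suc i)" for i
  proof -
    have "(-x)^Suc i = (-1)^Suc i * x^Suc i" by (rule power_minus)
    then show ?thesis by simp
  qed
  have "1 - qq n ^ k = (\<Sum>i<k. (-1)^i * real (k choose Suc i) * x^Suc i)"
    unfolding h1 t sum_negf by simp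
  then have "psi k n = x * (\<Sum>i<k. (-1)^i * real (k choose Suc i) * x^Suc i)"
    by (simp add: psi_def x_def)
  also have "\<dots> = (\<Sum>i<k. (-1)^i * real (k choose Suc i) * x^(i+2))"
    by (simp add: sum_distrib_left algebra_simps)
  finally show ?thesis by (simp add: x_def power_one_over)
qed

lemma psi_sums: "(\<lambda>n. psi k n) sums (\<Sum>i<k. (-1)^i * real (k choose Suc i) * zeta_nat (i+2))"
proof -
  have "(\<lambda>n. \<Sum>i<k. (-1)^i * real (k choose Suc i) * (1 / real (Suc n) ^ (i+2))) sums
     (\<Sum>i<k. (-1)^i * real (k choose Suc i) * (\<Sum>n. 1 / real (Suc n) ^ (i+2)))"
    by (intro sums_sum sums_mult summable_sums zeta_summable) simp
  then show ?thesis by (simp add: psi_expand zeta_nat_def)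
qed

lemma GG0: "GG k 0 = 0" by (auto simp: GG_def qq_def power_0_left intro!: sum.neutral)

lemma II_sums: "(\<lambda>n. II k n) sums harm k"
proof -
  have qeq: "qq = (\<lambda>n. 1 - inverse (real (Suc n)))" by (simp add: qq_def fun_eq_iff inverse_eq_divide)
  have qlim: "qq \<longlonglongrightarrow> 1"
  proof -
    have "(\<lambda>n. 1 - inverse (real (Suc n))) \<longlonglongrightarrow> 1 - 0"
      by (intro tendsto_diff tendsto_const LIMSEQ_inverse_real_of_nat)
    then show ?thesis by (simp add: qeq)
  qed
  have GGe: "GG k n = (\<Sum>j\<le>k. qq n ^ j * inverse (real j))" for n
    by (simp add: GG_def divide_inverse)
  have "(\<lambda>n. \<Sum>j\<le>k. qq n ^ j * inverse (real j)) \<longlonglongrightarrow> (\<Sum>j\<le>k. 1 ^ j * inverse (real j))"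
    by (intro tendsto_sum tendsto_mult tendsto_power qlim tendsto_const)
  then have "(\<lambda>n. GG k n) \<longlonglongrightarrow> (\<Sum>j\<le>k. 1 ^ j * inverse (real j))" by (simp only: GGe)
  moreover have "(\<Sum>j\<le>k. 1 ^ j * inverse (real j)) = harm k"
    by (simp add: harm_def atMost_atLeast0 sum.atLeast_Suc_atMost)
  ultimately have "(\<lambda>n. GG k n) \<longlonglongrightarrow> harm k" by simp
  from telescope_sums[OF this] show ?thesis by (simp add: II_def GG0)
qed

lemma pow_diff_bounds:
  fixes a b :: real
  assumes "0 \<le> a" "a \<le> b"
  shows "a^i * (b - a) \<le> (b^Suc i - a^Suc i) / real (Suc i)"
    and "(b^Suc i - a^Suc i) / real (Suc i) \<le> b^i * (b - a)"
proof -
  have eq: "b^Suc i - a^Suc i = (b - a) * (\<Sum>p<Suc i. b^p * a^(i - p))"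
    by (rule diff_power_eq_sum)
  have lo: "a^i \<le> b^p * a^(i-p)" if "p < Suc i" for p
  proof -
    have "a^i = a^p * a^(i-p)" using that by (simp add: power_add[symmetric])
    also have "\<dots> \<le> b^p * a^(i-p)" using assms by (intro mult_right_mono power_mono) auto
    finally show ?thesis .
  qed
  have hi: "b^p * a^(i-p) \<le> b^i" if "p < Suc i" for p
  proof -
    have "b^p * a^(i-p) \<le> b^p * b^(i-p)" using assms by (intro mult_left_mono power_mono) auto
    also have "\<dots> = b^i" using that by (simp add: power_add[symmetric])
    finally show ?thesis .
  qed
  have "real (Suc i) * a^i \<le> (\<Sum>p<Suc i. b^p * a^(i - p))"
    using sum_bounded_below[of "{..<Suc i}" "a^i" "\<lambda>p. b^p * a^(i-p)"] lo by simp
  moreover have "(\<Sum>p<Suc i. b^p * a^(i - p)) \<le> real (Suc i) * b^i"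
    using sum_bounded_above[of "{..<Suc i}" "\<lambda>p. b^p * a^(i-p)" "b^i"] hi by simp
  moreover have D: "0 \<le> b - a" using assms by simp
  ultimately have l1: "a^i \<le> (\<Sum>p<Suc i. b^p * a^(i - p)) / real (Suc i)"
    and l2: "(\<Sum>p<Suc i. b^p * a^(i - p)) / real (Suc i) \<le> b^i"
    by (simp_all only: le_divide_eq divide_le_eq of_nat_0_less_iff zero_less_Suc if_True mult.commute)
  have e2: "(b^Suc i - a^Suc i) / real (Suc i) = (\<Sum>p<Suc i. b^p * a^(i - p)) / real (Suc i) * (b - a)"
    unfolding eq by simp
  show "a^i * (b - a) \<le> (b^Suc i - a^Suc i) / real (Suc i)"
    unfolding e2 using l1 D by (rule mult_right_mono)
  show "(b^Suc i - a^Suc i) / real (Suc i) \<le> b^i * (b - a)"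
    unfolding e2 using l2 D by (rule mult_right_mono)
qed

lemma II_alt: "II k n = (\<Sum>i<k. (qq (Suc n) ^ Suc i - qq n ^ Suc i) / real (Suc i))"
proof -
  have "II k n = (\<Sum>j\<le>k. (qq (Suc n) ^ j - qq n ^ j) / real j)"
    by (simp add: II_def GG_def sum_subtractf diff_divide_distrib)
  also have "\<dots> = (\<Sum>i<k. (qq (Suc n) ^ Suc i - qq n ^ Suc i) / real (Suc i))"
    by (cases k) (simp_all only: sum.atMost_Suc_shift lessThan_Suc_atMost, simp_all)
  finally show ?thesis .
qed

lemma cc_bound: "\<bar>cc k n\<bar> \<le> 1 / real (Suc n) ^ 2"
proof -
  define N where "N = real (Suc n)"
  define a where "a = qq n"
  define b where "b = qq (Suc n)"
  have N: "N \<ge> 1" by (simp add: N_def)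
  have a: "a = 1 - 1/N" by (simp add: a_def N_def qq_def)
  have b: "b = 1 - 1/(N+1)" by (simp add: b_def N_def qq_def)
  have a0: "0 \<le> a" using N by (simp add: a field_simps)
  have ab: "a \<le> b" using N by (simp add: a b field_simps)
  have b1: "b < 1" using N by (simp add: b)
  have ba: "b - a = 1/(N*(N+1))" using N by (simp add: a b field_simps)
  have II: "II k n = (\<Sum>i<k. (b ^ Suc i - a ^ Suc i) / real (Suc i))"
    by (simp add: II_alt a_def b_def)
  have "(\<Sum>i<k. a^i * (b - a)) \<le> II k n"
    unfolding II by (intro sum_mono pow_diff_bounds(1)[OF a0 ab])
  moreover have "II k n \<le> (\<Sum>i<k. b^i * (b - a))"
    unfolding II by (intro sum_mono pow_diff_bounds(2)[OF a0 ab])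
  moreover have "(\<Sum>i<k. a^i * (b - a)) = (1 - a^k) / (N+1)"
  proof -
    have a1: "1 - a = 1/N" by (simp add: a)
    have "1 - a^k = (1 - a) * (\<Sum>i<k. a^i)" by (rule one_diff_power_eq)
    then have "1 - a^k = (\<Sum>i<k. a^i) / N" by (simp add: a1)
    then have Sa: "(\<Sum>i<k. a^i) = N * (1 - a^k)" using N by (simp add: field_simps)
    have "(\<Sum>i<k. a^i * (b - a)) = (\<Sum>i<k. a^i) * (b - a)" by (simp add: sum_distrib_right)
    also have "\<dots> = (1 - a^k) / (N+1)"
    proof -
      have "\<And>x. N * x * (1/(N*(N+1))) = x/(N+1)"
      proof -
        fix x
        have "N \<noteq> 0" using N by simp
        then have "(N * x) / (N * (N+1)) = x/(N+1)" by (rule nonzero_mult_divide_mult_cancel_left)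
        then show "N * x * (1/(N*(N+1))) = x/(N+1)" by simp
      qed
      then show ?thesis by (simp only: Sa ba)
    qed
    finally show ?thesis .
  qed
  moreover have "(\<Sum>i<k. b^i * (b - a)) = (1 - b^k) / N"
  proof -
    have b1': "1 - b = 1/(N+1)" by (simp add: b)
    have "1 - b^k = (1 - b) * (\<Sum>i<k. b^i)" by (rule one_diff_power_eq)
    then have hb: "1 - b^k = (\<Sum>i<k. b^i) / (N+1)" by (simp add: b1')
    have "(N+1) * (1 - b^k) = (N+1) * ((\<Sum>i<k. b^i) / (N+1))" by (simp only: hb)
    also have "\<dots> = (\<Sum>i<k. b^i)" using N by simp
    finally have Sb: "(\<Sum>i<k. b^i) = (N+1) * (1 - b^k)" by simp
    have "(\<Sum>i<k. b^i * (b - a)) = (\<Sum>i<k. b^i) * (b - a)" by (simp add: sum_distrib_right)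
    also have "\<dots> = (1 - b^k) / N"
    proof -
      have "\<And>x. (N+1) * x * (1/(N*(N+1))) = x/N"
      proof -
        fix x
        have "N+1 \<noteq> 0" using N by simp
        then have "((N+1) * x) / ((N+1) * N) = x/N" by (rule nonzero_mult_divide_mult_cancel_left)
        then show "(N+1) * x * (1/(N*(N+1))) = x/N" by (simp add: mult.commute)
      qed
      then show ?thesis by (simp only: Sb ba)
    qed
    finally show ?thesis .
  qed
  ultimately have lo: "(1 - a^k) / (N+1) \<le> II k n" and hi: "II k n \<le> (1 - b^k) / N"
    by simp_all
  have psi: "psi k n = (1 - a^k) / N" by (simp add: psi_def a_def N_def)
  have akbk: "a^k \<le> b^k" using ab a0 by (rule power_mono)
  have bk1: "b^k \<le> 1" using a0 ab b1 by (simp add: power_le_one)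
  have ak0: "0 \<le> a^k" using a0 by simp
  have "cc k n \<ge> 0"
  proof -
    have "(1 - b^k) / N \<le> (1 - a^k) / N" using akbk N by (intro divide_right_mono) auto
    then show ?thesis using hi by (simp add: cc_def psi)
  qed
  moreover have "cc k n \<le> 1 / N^2"
  proof -
    have "cc k n \<le> (1 - a^k) / N - (1 - a^k) / (N+1)" using lo by (simp add: cc_def psi)
    also have "\<dots> = (1 - a^k) / (N * (N+1))" using N by (simp add: field_simps)
    also have "\<dots> \<le> 1 / (N * (N+1))" using ak0 N by (intro divide_right_mono) auto
    also have "\<dots> \<le> 1 / N^2" using N by (intro divide_left_mono) (auto simp: power2_eq_square)
    finally show ?thesis .
  qed
  ultimately show ?thesis by (simp add: N_def)
qed

lemma GG_lim: "(\<lambda>k. GG k n) \<longlonglongrightarrow> ln (real (Suc n))"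
proof -
  define q where "q = qq n"
  have q0: "0 \<le> q" and q1: "q < 1" by (auto simp: q_def qq_def)
  have "(\<lambda>j. - ((- (- q))^j) / of_nat j) sums ln (1 + - q)"
    by (rule ln_series') (use q0 q1 in auto)
  then have "(\<lambda>j. q^j / real j) sums (- ln (1 - q))"
    using sums_minus by fastforce
  then have "(\<lambda>m. \<Sum>j<m. q^j / real j) \<longlonglongrightarrow> - ln (1 - q)" by (simp add: sums_def)
  then have "(\<lambda>k. \<Sum>j<Suc k. q^j / real j) \<longlonglongrightarrow> - ln (1 - q)" by (rule LIMSEQ_Suc)
  moreover have "- ln (1 - q) = ln (real (Suc n))"
    by (simp add: q_def qq_def ln_div)
  ultimately show ?thesis by (simp add: GG_def q_def lessThan_Suc_atMost)
qed

lemma cc_lim: "(\<lambda>k. cc k n) \<longlonglongrightarrow> inverse (of_nat (n+1)) + ln (of_nat (n+1)) - ln (of_nat (n+2))"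
proof -
  have q0: "0 \<le> qq n" and q1: "qq n < 1" by (auto simp: qq_def)
  have "(\<lambda>k. psi k n) \<longlonglongrightarrow> (1 - 0) / real (Suc n)"
    unfolding psi_def by (intro tendsto_intros LIMSEQ_power_zero) (use q0 q1 in auto)
  moreover have "(\<lambda>k. II k n) \<longlonglongrightarrow> ln (real (Suc (Suc n))) - ln (real (Suc n))"
    unfolding II_def by (intro tendsto_intros GG_lim)
  ultimately have "(\<lambda>k. cc k n) \<longlonglongrightarrow> (1 - 0) / real (Suc n) - (ln (real (Suc (Suc n))) - ln (real (Suc n)))"
    unfolding cc_def by (intro tendsto_intros)
  then show ?thesis by (simp add: inverse_eq_divide algebra_simps)
qed

lemma RHS5_alt: "0 < k \<Longrightarrow> RHS5 k = (\<Sum>i<k. (-1)^i * real (k choose Suc i) * zeta_nat (i+2)) - harm k"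
proof -
  assume k: "0 < k"
  obtain k' where k': "k = Suc k'" using k by (cases k) auto
  have "(\<Sum>m = 2..k + 1. (-1) ^ m * real (k choose (m - 1)) * zeta_nat m) = (\<Sum>m = 0+2..k'+2. (-1) ^ m * real (k choose (m - 1)) * zeta_nat m)"
    by (rule sum.cong) (auto simp: k')
  also have "\<dots> = (\<Sum>i = 0..k'. (-1) ^ (i+2) * real (k choose (i+2 - 1)) * zeta_nat (i+2))"
    by (rule sum.shift_bounds_cl_nat_ivl)
  also have "\<dots> = (\<Sum>i<k. (-1)^i * real (k choose Suc i) * zeta_nat (i+2))"
    by (simp add: k' atLeast0AtMost lessThan_Suc_atMost)
  finally show ?thesis by (simp add: RHS5_def)
qed

lemma RHS5_cc: "0 < k \<Longrightarrow> RHS5 k = (\<Sum>n. cc k n)"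
proof -
  assume k: "0 < k"
  have "(\<lambda>n. cc k n) sums ((\<Sum>i<k. (-1)^i * real (k choose Suc i) * zeta_nat (i+2)) - harm k)"
    unfolding cc_def by (intro sums_diff psi_sums II_sums)
  then show ?thesis using RHS5_alt[OF k] by (simp add: sums_iff)
qed

lemma part2: "(\<lambda>n. RHS5 (4 * Suc n)) \<longlonglongrightarrow> euler_mascheroni"
proof -
  have sM: "summable (\<lambda>n. 1 / real (Suc n) ^ 2)" by (rule zeta_summable) simp
  have T: "((\<lambda>k. \<Sum>n. cc k n) \<longlonglongrightarrow> (\<Sum>n. inverse (of_nat (n+1)) + ln (of_nat (n+1)) - ln (of_nat (n+2)) :: real))"
    using tannerys_theorem[where a="\<lambda>n k. cc k n" and b="\<lambda>n. inverse (of_nat (n+1)) + ln (of_nat (n+1)) - ln (of_nat (n+2)) :: real"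
        and M="\<lambda>n. 1 / real (Suc n) ^ 2" and F=sequentially]
    using cc_lim cc_bound sM by (auto intro: always_eventually)
  have "(\<Sum>n. inverse (of_nat (n+1)) + ln (of_nat (n+1)) - ln (of_nat (n+2)) :: real) = euler_mascheroni"
    using euler_mascheroni_sum_real by (simp add: sums_iff)
  with T have L: "(\<lambda>k. \<Sum>n. cc k n) \<longlonglongrightarrow> euler_mascheroni" by simp
  have sm: "strict_mono (\<lambda>n::nat. 4 * Suc n)" by (auto simp: strict_mono_def)
  have "((\<lambda>k. \<Sum>n. cc k n) \<circ> (\<lambda>n. 4 * Suc n)) \<longlonglongrightarrow> euler_mascheroni"
    by (rule LIMSEQ_subseq_LIMSEQ[OF L sm])
  moreover have "((\<lambda>k. \<Sum>n. cc k n) \<circ> (\<lambda>n. 4 * Suc n)) = (\<lambda>n. RHS5 (4 * Suc n))"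
    by (auto simp: RHS5_cc)
  ultimately show ?thesis by simp
qed

theorem mainTheorem5:
  shows "(\<forall>k::nat. 0 < k \<and> 4 dvd k \<longrightarrow> Determinant.det (A1_mat k) = RHS5 k)
       \<and> (\<lambda>n. RHS5 (4 * Suc n)) \<longlonglongrightarrow> euler_mascheroni"
  using part1 part2 by blast

end
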